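(* Let $\mathcal{S}\subset\mathbb{R}^n$ be compact convex with $\|x\|\le D$ for all $x\in\mathcal{S}$, and let $f_1,\dots,f_T:\mathcal{S}\to\mathbb{R}$ be differentiable and $\ell$-strongly convex with $\|\nabla f_t(x)\|\le G$ on $\mathcal{S}$. Let $\gamma\in(0,1)$, $\theta_1\in\mathcal{S}$ and $$\theta_{t+1}=\operatorname{argmin}_{\theta\in\mathcal{S}}\|\theta-(\theta_t-\eta_t\nabla f_t(\theta_t))\|^2,\qquad\eta_t=\frac{1-\gamma}{\ell(1-\gamma^t)}.$$ Then for all $z_1,\dots,z_T\in\mathcal{S}$ with $\sum_{t=2}^T\|z_t-z_{t-1}\|\le V$, $$\sum_{t=1}^T\big(f_t(\theta_t)-f_t(z_t)\big)\le\frac{2D\ell}{1-\gamma}V+\frac{G^2}{2}\sum_{t=1}^T\eta_t.$$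
   Context: $\ell$-strongly convex: $f(y)\ge f(x)+\nabla f(x)^\top(y-x)+\frac\ell2\|x-y\|^2$ for all $x,y\in\mathcal{S}$. *)

theory Defs
  imports "HOL-Analysis.Analysis"
begin

definition strongly_convex_grad_on ::
  "'a::euclidean_space set \<Rightarrow> real \<Rightarrow> ('a \<Rightarrow> real) \<Rightarrow> ('a \<Rightarrow> 'a) \<Rightarrow> bool" where
  "strongly_convex_grad_on S l f grad \<longleftrightarrow>
     (\<forall>x\<in>S. \<forall>y\<in>S. f y \<ge> f x + grad x \<bullet> (y - x) + l / 2 * (norm (x - y))\<^sup>2)"

end

theory Submission
  imports Defs
begin

lemma proj_nonexp:
  fixes S :: "'a::euclidean_space set"
  assumes "convex S" "closed S" "p \<in> S" "y \<in> S"
    and "\<forall>w\<in>S. (norm (p - x))\<^sup>2 \<le> (norm (w - x))\<^sup>2"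
  shows "(norm (p - y))\<^sup>2 \<le> (norm (x - y))\<^sup>2"
proof -
  have "\<forall>w\<in>S. dist x p \<le> dist x w"
    using assms(5) by (simp add: dist_norm norm_minus_commute)
  then have "inner (x - p) (y - p) \<le> 0"
    using any_closest_point_dot[OF assms(1-4)] by blast
  have e: "x - y = (x - p) + (p - y)" by simp
  have "(norm (x - y))\<^sup>2 = (norm (x - p))\<^sup>2 + 2 * inner (x - p) (p - y) + (norm (p - y))\<^sup>2"
    by (simp add: power2_norm_eq_inner inner_diff_left inner_diff_right inner_commute algebra_simps)
  moreover have "inner (x - p) (p - y) = - inner (x - p) (y - p)"
    by (simp add: inner_diff_right)
  ultimately show ?thesis using \<open>inner (x - p) (y - p) \<le> 0\<close>
    by (smt (verit) zero_le_power2)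
qed

lemma grad_step:
  fixes x g z :: "'a::real_inner"
  assumes "e > 0"
  shows "2 * inner g (x - z) = (norm (x - z))\<^sup>2 / e - (norm (x - e *\<^sub>R g - z))\<^sup>2 / e + e * (norm g)\<^sup>2"
proof -
  have h: "x - e *\<^sub>R g - z = (x - z) - e *\<^sub>R g" by simp
  have "(norm (x - e *\<^sub>R g - z))\<^sup>2 = (norm (x - z))\<^sup>2 - 2 * e * inner g (x - z) + e\<^sup>2 * (norm g)\<^sup>2"
    unfolding h power2_norm_eq_inner
    by (simp add: inner_diff_left inner_diff_right inner_commute power2_eq_square algebra_simps)
  then show ?thesis using assms by (simp add: field_simps power2_eq_square)
qed

lemma sqdiff:
  fixes u v :: "'a::real_normed_vector"
  assumes "norm u \<le> B" "norm v \<le> B"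
  shows "(norm u)\<^sup>2 - (norm v)\<^sup>2 \<le> 2 * B * norm (u - v)"
proof -
  have "(norm u)\<^sup>2 - (norm v)\<^sup>2 = (norm u + norm v) * (norm u - norm v)"
    by (simp add: power2_eq_square algebra_simps)
  also have "\<dots> \<le> (norm u + norm v) * norm (u - v)"
    by (intro mult_left_mono) (auto simp: norm_triangle_ineq2)
  also have "\<dots> \<le> 2 * B * norm (u - v)"
    using assms by (intro mult_right_mono) auto
  finally show ?thesis .
qed
theorem theorem3p6:
  fixes S :: "'a::euclidean_space set"
    and f :: "nat \<Rightarrow> 'a \<Rightarrow> real"
    and grad :: "nat \<Rightarrow> 'a \<Rightarrow> 'a"
    and \<theta> z :: "nat \<Rightarrow> 'a"
    and T :: nat
    and D G l \<gamma> V :: real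
    and \<eta> :: "nat \<Rightarrow> real"
  assumes S_compact: "compact S"
    and S_convex: "convex S"
    and S_bounded: "\<forall>x\<in>S. norm x \<le> D"
    and l_pos: "l > 0"
    and f_diff: "\<forall>t\<in>{1..T}. \<forall>x\<in>S. (f t has_derivative (\<lambda>h. grad t x \<bullet> h)) (at x)"
    and f_sc: "\<forall>t\<in>{1..T}. strongly_convex_grad_on S l (f t) (grad t)"
    and grad_bound: "\<forall>t\<in>{1..T}. \<forall>x\<in>S. norm (grad t x) \<le> G"
    and \<gamma>_range: "0 < \<gamma>" "\<gamma> < 1"
    and \<eta>_def: "\<forall>t. \<eta> t = (1 - \<gamma>) / (l * (1 - \<gamma> ^ t))"
    and \<theta>1: "\<theta> 1 \<in> S"
    and \<theta>_step: "\<forall>t\<in>{1..<T}. \<theta> (t + 1) \<in> S \<and>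
        (\<forall>y\<in>S. (norm (\<theta> (t + 1) - (\<theta> t - \<eta> t *\<^sub>R grad t (\<theta> t))))\<^sup>2
                \<le> (norm (y - (\<theta> t - \<eta> t *\<^sub>R grad t (\<theta> t))))\<^sup>2)"
    and z_in: "\<forall>t\<in>{1..T}. z t \<in> S"
    and z_var: "(\<Sum>t=2..T. norm (z t - z (t - 1))) \<le> V"
  shows "(\<Sum>t=1..T. f t (\<theta> t) - f t (z t))
           \<le> 2 * D * l / (1 - \<gamma>) * V + G\<^sup>2 / 2 * (\<Sum>t=1..T. \<eta> t)"
proof -
  have D0: "0 \<le> D" using S_bounded \<theta>1 norm_ge_zero order_trans by blast
  have th_in: "\<theta> t \<in> S" if "t \<in> {1..T}" for t
    using that
  proof (induction t)
    case 0 then show ?case by simp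
  next
    case (Suc n)
    show ?case
    proof (cases "n = 0")
      case True then show ?thesis using \<theta>1 by simp
    next
      case False then show ?thesis using Suc \<theta>_step by auto
    qed
  qed
  have closedS: "closed S" using S_compact compact_imp_closed by blast
  define a where "a t = l * (1 - \<gamma> ^ t) / (1 - \<gamma>)" for t :: nat
  have g1: "1 - \<gamma> > 0" using \<gamma>_range by simp
  have a0: "a 0 = 0" by (simp add: a_def)
  have apos: "a t > 0" if "t \<ge> 1" for t
  proof -
    have "\<gamma> ^ t < 1" using \<gamma>_range that by (simp add: power_less_one_iff)
    then show ?thesis using l_pos g1 by (simp add: a_def)
  qed
  have anneg: "a t \<ge> 0" for t
  proof -
    have "\<gamma> ^ t \<le> 1" using \<gamma>_range by (simp add: power_le_one)
    then show ?thesis using l_pos g1 by (simp add: a_def)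
  qed
  have aup: "a t \<le> l / (1 - \<gamma>)" for t
  proof -
    have "\<gamma> ^ t \<ge> 0" using \<gamma>_range by simp
    then have "l * (1 - \<gamma> ^ t) \<le> l" using l_pos by (simp add: algebra_simps)
    then show ?thesis using g1 by (simp add: a_def divide_right_mono)
  qed
  have astep: "a (Suc t) - l = \<gamma> * a t" for t
    using g1 by (simp add: a_def field_simps)
  have eta_a: "\<eta> t = 1 / a t" for t
    using \<eta>_def by (simp add: a_def)
  have eta_pos: "\<eta> t > 0" if "t \<ge> 1" for t
    using apos[OF that] eta_a by simp
  define \<Psi> where "\<Psi> t = (if 1 \<le> t \<and> t \<le> T then a (t - 1) * (norm (\<theta> t - z (t - 1)))\<^sup>2 else 0)" for t
  define w where "w t = (if t \<ge> 2 then norm (z t - z (t - 1)) else 0)" for t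
  define C where "C = 4 * D * l / (1 - \<gamma>)"
  have C0: "C \<ge> 0" using D0 l_pos g1 by (simp add: C_def)
  have per: "2 * (f t (\<theta> t) - f t (z t)) \<le> \<Psi> t - \<Psi> (Suc t) + C * w t + \<eta> t * G\<^sup>2"
    if t: "t \<in> {1..T}" for t
  proof -
    define x where "x = \<theta> t"
    define g where "g = grad t x"
    define zt where "zt = z t"
    have xS: "x \<in> S" using th_in t by (simp add: x_def)
    have zS: "zt \<in> S" using z_in t by (simp add: zt_def)
    have t1: "t \<ge> 1" using t by simp
    have "f t zt \<ge> f t x + g \<bullet> (zt - x) + l / 2 * (norm (x - zt))\<^sup>2"
      using f_sc t xS zS unfolding strongly_convex_grad_on_def g_def by blast
    moreover have "g \<bullet> (zt - x) = - (g \<bullet> (x - zt))" by (simp add: inner_diff_right)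
    ultimately have sc: "f t x - f t zt \<le> g \<bullet> (x - zt) - l / 2 * (norm (x - zt))\<^sup>2" by linarith
    have gs: "2 * (g \<bullet> (x - zt)) = a t * (norm (x - zt))\<^sup>2 - a t * (norm (x - \<eta> t *\<^sub>R g - zt))\<^sup>2 + \<eta> t * (norm g)\<^sup>2"
      using grad_step[OF eta_pos[OF t1], of g x zt] eta_a[of t] by simp
    have gG: "(norm g)\<^sup>2 \<le> G\<^sup>2"
      using grad_bound t xS unfolding g_def by (simp add: power_mono)
    have etag: "\<eta> t * (norm g)\<^sup>2 \<le> \<eta> t * G\<^sup>2"
      using gG eta_pos[OF t1] by (simp add: mult_left_mono)
    have psiS: "a t * (norm (x - \<eta> t *\<^sub>R g - zt))\<^sup>2 \<ge> \<Psi> (Suc t)"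
    proof (cases "t < T")
      case True
      have st: "\<theta> (t + 1) \<in> S \<and> (\<forall>y\<in>S. (norm (\<theta> (t + 1) - (x - \<eta> t *\<^sub>R g)))\<^sup>2
                \<le> (norm (y - (x - \<eta> t *\<^sub>R g)))\<^sup>2)"
        using \<theta>_step True t1 unfolding x_def g_def by auto
      have "(norm (\<theta> (t + 1) - zt))\<^sup>2 \<le> (norm ((x - \<eta> t *\<^sub>R g) - zt))\<^sup>2"
        using proj_nonexp[OF S_convex closedS _ zS] st by blast
      then have "a t * (norm (\<theta> (t + 1) - zt))\<^sup>2 \<le> a t * (norm (x - \<eta> t *\<^sub>R g - zt))\<^sup>2"
        using anneg by (simp add: mult_left_mono)
      then show ?thesis using True unfolding \<Psi>_def zt_def by simp
    next
      case False
      then show ?thesis unfolding \<Psi>_def using anneg by simp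
    qed
    have main1: "2 * (f t x - f t zt) \<le> (a t - l) * (norm (x - zt))\<^sup>2 - \<Psi> (Suc t) + \<eta> t * G\<^sup>2"
      using sc gs etag psiS by (simp add: algebra_simps)
    obtain s where s: "t = Suc s" using t1 by (cases t) auto
    have "a t - l = \<gamma> * a (t - 1)" using astep s by simp
    have key: "\<gamma> * a (t - 1) * (norm (x - zt))\<^sup>2 \<le> \<Psi> t + C * w t"
    proof (cases "t = 1")
      case True then show ?thesis using a0 C0 by (simp add: \<Psi>_def w_def)
    next
      case False
      then have t2: "t \<ge> 2" using t1 by simp
      define v where "v = x - z (t - 1)"
      have "t - 1 \<in> {1..T}" using t t2 by auto
      then have zS': "z (t - 1) \<in> S" using z_in by blast
      have nu: "norm (x - zt) \<le> 2 * D"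
      proof -
        have "norm x \<le> D" "norm zt \<le> D" using S_bounded xS zS by auto
        then show ?thesis using norm_triangle_ineq4[of x zt] by linarith
      qed
      have nv: "norm v \<le> 2 * D"
      proof -
        have "norm x \<le> D" "norm (z (t - 1)) \<le> D" using S_bounded xS zS' by auto
        then show ?thesis using norm_triangle_ineq4[of x "z (t - 1)"] unfolding v_def by linarith
      qed
      have "(norm (x - zt))\<^sup>2 - (norm v)\<^sup>2 \<le> 2 * (2 * D) * norm ((x - zt) - v)"
        using sqdiff[OF nu nv] .
      also have "norm ((x - zt) - v) = w t"
        using t2 by (simp add: v_def w_def zt_def norm_minus_commute)
      finally have d: "(norm (x - zt))\<^sup>2 \<le> (norm v)\<^sup>2 + 4 * D * w t" by simp
      have wnn: "w t \<ge> 0" by (simp add: w_def)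
      have "\<gamma> * a (t - 1) * (norm (x - zt))\<^sup>2 \<le> a (t - 1) * (norm (x - zt))\<^sup>2"
        using \<gamma>_range anneg[of "t - 1"] by (intro mult_right_mono) (auto simp: mult_le_cancel_right1 mult_left_le_one_le)
      also have "\<dots> \<le> a (t - 1) * ((norm v)\<^sup>2 + 4 * D * w t)"
        using d anneg[of "t - 1"] by (simp add: mult_left_mono)
      also have "\<dots> = \<Psi> t + a (t - 1) * (4 * D * w t)"
        using t by (simp add: \<Psi>_def v_def x_def algebra_simps)
      also have "a (t - 1) * (4 * D * w t) \<le> l / (1 - \<gamma>) * (4 * D * w t)"
        using aup[of "t - 1"] D0 wnn by (intro mult_right_mono) auto
      also have "l / (1 - \<gamma>) * (4 * D * w t) = C * w t" by (simp add: C_def)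
      finally show ?thesis by simp
    qed
    show ?thesis using main1 key \<open>a t - l = \<gamma> * a (t - 1)\<close> unfolding x_def zt_def by simp
  qed
  have "(\<Sum>t=1..T. 2 * (f t (\<theta> t) - f t (z t)))
        \<le> (\<Sum>t=1..T. \<Psi> t - \<Psi> (Suc t) + C * w t + \<eta> t * G\<^sup>2)"
    using per by (rule sum_mono)
  also have "\<dots> = (\<Sum>t=1..T. \<Psi> t - \<Psi> (Suc t)) + C * (\<Sum>t=1..T. w t) + G\<^sup>2 * (\<Sum>t=1..T. \<eta> t)"
    by (simp add: sum.distrib sum_distrib_left mult.commute)
  also have "(\<Sum>t=1..T. \<Psi> t - \<Psi> (Suc t)) = 0"
  proof -
    have "(\<Sum>t=1..T. \<Psi> (Suc t) - \<Psi> t) = \<Psi> (Suc T) - \<Psi> 1"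
      by (rule sum_Suc_diff) simp
    moreover have "\<Psi> (Suc T) = 0" "\<Psi> 1 = 0" by (simp_all add: \<Psi>_def a0)
    ultimately have "(\<Sum>t=1..T. \<Psi> (Suc t) - \<Psi> t) = 0" by simp
    then show ?thesis by (simp add: sum_subtractf)
  qed
  also have "(\<Sum>t=1..T. w t) = (\<Sum>t=2..T. norm (z t - z (t - 1)))"
  proof (cases "T \<ge> 1")
    case True
    then have "(\<Sum>t=1..T. w t) = w 1 + (\<Sum>t=2..T. w t)"
      using sum.atLeast_Suc_atMost[of 1 T w] by (simp add: numeral_2_eq_2)
    also have "(\<Sum>t=2..T. w t) = (\<Sum>t=2..T. norm (z t - z (t - 1)))"
      by (rule sum.cong) (auto simp: w_def)
    finally show ?thesis by (simp add: w_def)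
  next
    case False then show ?thesis by simp
  qed
  finally have "(\<Sum>t=1..T. 2 * (f t (\<theta> t) - f t (z t)))
     \<le> C * (\<Sum>t=2..T. norm (z t - z (t - 1))) + G\<^sup>2 * (\<Sum>t=1..T. \<eta> t)" by simp
  also have "\<dots> \<le> C * V + G\<^sup>2 * (\<Sum>t=1..T. \<eta> t)"
    using z_var C0 by (simp add: mult_left_mono)
  finally have "2 * (\<Sum>t=1..T. f t (\<theta> t) - f t (z t)) \<le> C * V + G\<^sup>2 * (\<Sum>t=1..T. \<eta> t)"
    by (simp add: sum_distrib_left)
  then show ?thesis by (simp add: C_def field_simps)
qed

end
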